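(* Fix the hypervector dimension $d>0$ and the corresponding round number $J_d\ge1$. For each user $i\in\{1,\dots,U\}$ define $$t_i^{\max}(d)=\frac{T-\frac{Z_id+(J_d-1)G_id}{f_i^{\max}}}{J_d},$$ and for $t>0$ let $b_i^{\min}(t)=\inf\{b>0:\ t\,b\log_2(1+\frac{p_i^{\max}g_i}{N_0b})\ge N_id\}\in(0,\infty]$. Then the set of $(\boldsymbol t,\boldsymbol b,\boldsymbol p,\boldsymbol f)$ satisfying, for all $i$, $$\frac{Z_id+(J_d-1)G_id}{f_i}+J_dt_i\le T,\quad t_ib_i\log_2\!\Big(1+\frac{p_ig_i}{N_0b_i}\Big)\ge N_id,\quad\sum_{j=1}^Ub_j\le B,\quad 0\le p_i\le p_i^{\max},\quad 0<f_i\le f_i^{\max},\quad b_i>0,\quad t_i\ge0$$ is nonempty if and only if (1) $t_i^{\max}(d)>0$ for all $i$, and (2) $\sum_{i=1}^U b_i^{\min}\big(t_i^{\max}(d)\big)\le B$.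
   Context: $U$ users; $t_i,b_i,p_i,f_i$ are user $i$'s per-round transmission time, bandwidth, transmit power and CPU frequency, with limits $p_i^{\max}>0$, $f_i^{\max}>0$; $g_i>0$ the channel power gain, $N_0>0$ the noise power spectral density, $N_i>0$ the number of classes (payload $N_id$ bits), $B>0$ the total bandwidth, $T>0$ the total time budget; $Z_i=D_iC_i^{(\mathrm{init})}>0$ and $G_i=D_iC_i^{(\mathrm{ret})}\ge0$ the per-dimension CPU cycles for the first round and for each retraining round. *)

theory Defs
  imports "HOL-Analysis.Analysis"
begin

definition t_max :: "real \<Rightarrow> nat \<Rightarrow> real \<Rightarrow> real \<Rightarrow> nat \<Rightarrow> real \<Rightarrow> real" where
  "t_max T J Z G d fmax =
     (T - (Z * real d + (real J - 1) * G * real d) / fmax) / real J"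

text \<open>Minimal bandwidth for transmission time t, as an extended real
  (infimum of the empty set is +infinity).
  Arguments: p_i^max, g_i, N_0, payload N_i d, t.\<close>
definition b_min :: "real \<Rightarrow> real \<Rightarrow> real \<Rightarrow> real \<Rightarrow> real \<Rightarrow> ereal" where
  "b_min pmax g N0 payload t =
     Inf (ereal ` {b. b > 0 \<and> t * b * log 2 (1 + pmax * g / (N0 * b)) \<ge> payload})"

end

theory Submission
  imports Defs
begin

lemma ln_sqrt_bound:
  fixes x :: real assumes "x \<ge> 0"
  shows "ln (1 + x) \<le> 2 * sqrt x"
proof -
  have "1 + x \<le> (1 + sqrt x)^2" using assms by (simp add: power2_eq_square algebra_simps)
  hence "ln (1 + x) \<le> ln ((1 + sqrt x)^2)" using assms by (subst ln_le_cancel_iff) auto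
  also have "\<dots> = 2 * ln (1 + sqrt x)" using assms by (simp add: ln_realpow)
  also have "\<dots> \<le> 2 * sqrt x" using ln_add_one_self_le_self[of "sqrt x"] assms by simp
  finally show ?thesis .
qed

lemma attain:
  fixes t a n P :: real
  assumes t: "t > 0" and a: "a > 0" and n: "n > 0" and P: "P > 0"
  defines "S \<equiv> {b. b > 0 \<and> t * b * log 2 (1 + a / (n * b)) \<ge> P}"
  shows "S = {} \<or> (\<exists>r\<in>S. \<forall>b\<in>S. r \<le> b)"
proof (cases "S = {}")
  case False
  define c where "c = a / n"
  have c: "c > 0" using a n by (simp add: c_def)
  define \<phi> where "\<phi> b = t * b * log 2 (1 + c / b)" for b
  have eqS: "S = {b. b > 0 \<and> P \<le> \<phi> b}"
    unfolding S_def \<phi>_def c_def by (simp add: field_simps)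
  define \<delta> where "\<delta> = (P * ln 2 / (2 * t))^2 / c"
  have \<delta>: "\<delta> > 0" using P t c by (simp add: \<delta>_def)
  have lb: "b \<ge> \<delta>" if "b \<in> S" for b
  proof -
    have b: "b > 0" and Pb: "P \<le> \<phi> b" using that eqS by auto
    have "\<phi> b = t * b * ln (1 + c / b) / ln 2" by (simp add: \<phi>_def log_def)
    also have "\<dots> \<le> t * b * (2 * sqrt (c / b)) / ln 2"
      using ln_sqrt_bound[of "c/b"] b c t
      by (intro divide_right_mono mult_left_mono) auto
    also have "b * sqrt (c / b) = sqrt (b * c)"
    proof -
      have "sqrt (b * c) = sqrt (b^2 * (c / b))" using b by (simp add: power2_eq_square)
      also have "\<dots> = b * sqrt (c / b)" using b by (simp only: real_sqrt_mult real_sqrt_abs abs_of_pos)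
      finally show ?thesis by simp
    qed
    hence "t * b * (2 * sqrt (c / b)) / ln 2 = 2 * t * sqrt (b * c) / ln 2"
      by (metis mult.assoc mult.left_commute)
    finally have "P \<le> 2 * t * sqrt (b * c) / ln 2" using Pb by simp
    hence "P * ln 2 / (2 * t) \<le> sqrt (b * c)" using t by (simp add: field_simps)
    hence "(P * ln 2 / (2 * t))^2 \<le> (sqrt (b * c))^2"
      using P t by (intro power_mono) auto
    hence "(P * ln 2 / (2 * t))^2 \<le> b * c" using b c by simp
    thus ?thesis using c by (simp add: \<delta>_def divide_le_eq mult.commute)
  qed
  have S2: "S = {b \<in> {\<delta>..}. P \<le> \<phi> b}"
    using lb \<delta> eqS by force
  have cont: "continuous_on {\<delta>..} \<phi>"
    unfolding \<phi>_def using \<delta> c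
    by (intro continuous_intros) (auto simp: field_simps add_pos_pos)
  have closedS: "closed S"
    unfolding S2 by (intro continuous_on_closed_Collect_le cont continuous_on_const) auto
  have bdd: "bdd_below S" using lb by (auto simp: bdd_below_def)
  have "Inf S \<in> S" using closure_contains_Inf[OF False bdd] closedS by (simp add: closure_closed)
  moreover have "\<forall>b\<in>S. Inf S \<le> b" using bdd by (simp add: cInf_lower)
  ultimately show ?thesis by blast
qed simp


lemma bmin_cases:
  assumes "t > 0" "pm > 0" "g > 0" "N0 > 0" "P > 0"
  shows "b_min pm g N0 P t = \<infinity> \<or>
    (\<exists>r. r > 0 \<and> t * r * log 2 (1 + pm * g / (N0 * r)) \<ge> P \<and> b_min pm g N0 P t = ereal r)"
proof -
  let ?S = "{b. b > 0 \<and> t * b * log 2 (1 + pm * g / (N0 * b)) \<ge> P}"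
  have "?S = {} \<or> (\<exists>r\<in>?S. \<forall>b\<in>?S. r \<le> b)"
    using attain[of t "pm * g" N0 P] assms by simp
  thus ?thesis
  proof
    assume e: "?S = {}"
    have "Inf (ereal ` ?S) = \<infinity>" unfolding e by (simp add: top_ereal_def)
    thus ?thesis by (simp add: b_min_def)
  next
    assume "\<exists>r\<in>?S. \<forall>b\<in>?S. r \<le> b"
    then obtain r where r: "r \<in> ?S" "\<forall>b\<in>?S. r \<le> b" by blast
    have "Inf (ereal ` ?S) = ereal r"
    proof (rule antisym)
      show "Inf (ereal ` ?S) \<le> ereal r" using r(1) by (intro Inf_lower) auto
      show "ereal r \<le> Inf (ereal ` ?S)" using r(2) by (intro Inf_greatest) auto
    qed
    thus ?thesis using r(1) by (auto simp: b_min_def)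
  qed
qed

lemma bmin_le:
  assumes "b > 0" "t * b * log 2 (1 + pm * g / (N0 * b)) \<ge> P"
  shows "b_min pm g N0 P t \<le> ereal b"
  unfolding b_min_def using assms by (intro Inf_lower) auto

theorem proposition2:
  fixes U :: nat and d :: nat and J :: nat
    and pmax fmax g Z G :: "nat \<Rightarrow> real" and N :: "nat \<Rightarrow> nat"
    and N0 B T :: real
  assumes "d > 0" and "J \<ge> 1"
    and "\<And>i. i \<in> {1..U} \<Longrightarrow> pmax i > 0"
    and "\<And>i. i \<in> {1..U} \<Longrightarrow> fmax i > 0"
    and "\<And>i. i \<in> {1..U} \<Longrightarrow> g i > 0"
    and "\<And>i. i \<in> {1..U} \<Longrightarrow> N i > 0"
    and "\<And>i. i \<in> {1..U} \<Longrightarrow> Z i > 0"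
    and "\<And>i. i \<in> {1..U} \<Longrightarrow> G i \<ge> 0"
    and "N0 > 0" and "B > 0" and "T > 0"
  shows "(\<exists>t b p f :: nat \<Rightarrow> real.
            (\<forall>i\<in>{1..U}.
               (Z i * real d + (real J - 1) * G i * real d) / f i + real J * t i \<le> T
             \<and> t i * b i * log 2 (1 + p i * g i / (N0 * b i)) \<ge> real (N i) * real d
             \<and> 0 \<le> p i \<and> p i \<le> pmax i
             \<and> 0 < f i \<and> f i \<le> fmax i
             \<and> b i > 0 \<and> t i \<ge> 0)
          \<and> (\<Sum>j\<in>{1..U}. b j) \<le> B)
     \<longleftrightarrow>
         ((\<forall>i\<in>{1..U}. t_max T J (Z i) (G i) d (fmax i) > 0)
          \<and> (\<Sum>i\<in>{1..U}. b_min (pmax i) (g i) N0 (real (N i) * real d)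
                              (t_max T J (Z i) (G i) d (fmax i))) \<le> ereal B)"
proof
  let ?K = "\<lambda>i. Z i * real d + (real J - 1) * G i * real d"
  let ?tm = "\<lambda>i. t_max T J (Z i) (G i) d (fmax i)"
  have J: "real J > 0" using assms(2) by simp
  have K: "?K i > 0" if "i \<in> {1..U}" for i
  proof -
    have "Z i * real d > 0" using assms(1) assms(7)[OF that] by simp
    moreover have "(real J - 1) * G i * real d \<ge> 0" using assms(2) assms(8)[OF that] by simp
    ultimately show ?thesis by linarith
  qed
  have tm_eq: "?K i / fmax i + real J * ?tm i = T" for i
    using J by (simp add: t_max_def)
  {
    assume "\<exists>t b p f :: nat \<Rightarrow> real.
            (\<forall>i\<in>{1..U}.
               (Z i * real d + (real J - 1) * G i * real d) / f i + real J * t i \<le> T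
             \<and> t i * b i * log 2 (1 + p i * g i / (N0 * b i)) \<ge> real (N i) * real d
             \<and> 0 \<le> p i \<and> p i \<le> pmax i
             \<and> 0 < f i \<and> f i \<le> fmax i
             \<and> b i > 0 \<and> t i \<ge> 0)
          \<and> (\<Sum>j\<in>{1..U}. b j) \<le> B"
    then obtain t b p f :: "nat \<Rightarrow> real" where
      H: "\<And>i. i \<in> {1..U} \<Longrightarrow>
               ?K i / f i + real J * t i \<le> T
             \<and> t i * b i * log 2 (1 + p i * g i / (N0 * b i)) \<ge> real (N i) * real d
             \<and> 0 \<le> p i \<and> p i \<le> pmax i
             \<and> 0 < f i \<and> f i \<le> fmax i
             \<and> b i > 0 \<and> t i \<ge> 0"
      and sb: "(\<Sum>j\<in>{1..U}. b j) \<le> B" by blast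
    have tle: "t i \<le> ?tm i" if i: "i \<in> {1..U}" for i
    proof -
      have "?K i / fmax i \<le> ?K i / f i"
        using H[OF i] K[OF i] by (intro divide_left_mono) auto
      hence "real J * t i \<le> real J * ?tm i" using H[OF i] tm_eq[of i] by linarith
      thus ?thesis using J by simp
    qed
    have tpos: "t i > 0" if i: "i \<in> {1..U}" for i
    proof (rule ccontr)
      assume "\<not> t i > 0"
      hence "t i = 0" using H[OF i] by simp
      moreover have "real (N i) * real d > 0" using assms(1) assms(6)[OF i] by simp
      ultimately show False using H[OF i] by simp
    qed
    have bm: "b_min (pmax i) (g i) N0 (real (N i) * real d) (?tm i) \<le> ereal (b i)"
      if i: "i \<in> {1..U}" for i
    proof (rule bmin_le)
      show "b i > 0" using H[OF i] by simp
      have bp: "b i > 0" and pp: "0 \<le> p i" "p i \<le> pmax i" using H[OF i] by auto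
      have "p i * g i / (N0 * b i) \<le> pmax i * g i / (N0 * b i)"
        using pp bp assms(5)[OF i] assms(9) by (intro divide_right_mono mult_right_mono) auto
      moreover have "0 \<le> p i * g i / (N0 * b i)"
        using pp bp assms(5)[OF i] assms(9) by simp
      ultimately have lg: "log 2 (1 + p i * g i / (N0 * b i)) \<le> log 2 (1 + pmax i * g i / (N0 * b i))"
        "0 \<le> log 2 (1 + p i * g i / (N0 * b i))" by auto
      have "t i * b i * log 2 (1 + p i * g i / (N0 * b i))
            \<le> ?tm i * b i * log 2 (1 + pmax i * g i / (N0 * b i))"
        using lg tle[OF i] tpos[OF i] bp
        by (intro mult_mono) (auto intro: mult_nonneg_nonneg)
      thus "real (N i) * real d \<le> ?tm i * b i * log 2 (1 + pmax i * g i / (N0 * b i))"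
        using H[OF i] by linarith
    qed
    have "(\<Sum>i\<in>{1..U}. b_min (pmax i) (g i) N0 (real (N i) * real d) (?tm i))
          \<le> (\<Sum>i\<in>{1..U}. ereal (b i))"
      using bm by (intro sum_mono) auto
    also have "\<dots> = ereal (\<Sum>i\<in>{1..U}. b i)" by simp
    also have "\<dots> \<le> ereal B" using sb by simp
    finally have "(\<Sum>i\<in>{1..U}. b_min (pmax i) (g i) N0 (real (N i) * real d) (?tm i)) \<le> ereal B" .
    moreover have "\<forall>i\<in>{1..U}. ?tm i > 0" using tle tpos by (meson less_le_trans)
    ultimately show "(\<forall>i\<in>{1..U}. ?tm i > 0)
          \<and> (\<Sum>i\<in>{1..U}. b_min (pmax i) (g i) N0 (real (N i) * real d) (?tm i)) \<le> ereal B"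
      by blast
  }
  {
    assume A: "(\<forall>i\<in>{1..U}. ?tm i > 0)
          \<and> (\<Sum>i\<in>{1..U}. b_min (pmax i) (g i) N0 (real (N i) * real d) (?tm i)) \<le> ereal B"
    let ?bm = "\<lambda>i. b_min (pmax i) (g i) N0 (real (N i) * real d) (?tm i)"
    have cs: "?bm i = \<infinity> \<or> (\<exists>r. r > 0 \<and> ?tm i * r * log 2 (1 + pmax i * g i / (N0 * r)) \<ge> real (N i) * real d
               \<and> ?bm i = ereal r)" if i: "i \<in> {1..U}" for i
    proof -
      have "?tm i > 0" using A i by blast
      moreover have "real (N i) * real d > 0" using assms(1) assms(6)[OF i] by simp
      ultimately show ?thesis using assms(3)[OF i] assms(5)[OF i] assms(9) by (intro bmin_cases)
    qed
    have nf: "?bm i \<noteq> \<infinity>" if i: "i \<in> {1..U}" for i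
    proof
      assume "?bm i = \<infinity>"
      hence "sum ?bm {1..U} = \<infinity>" using i by (subst sum_Pinfty) auto
      thus False using A by simp
    qed
    define b where "b i = (SOME r. r > 0 \<and> ?tm i * r * log 2 (1 + pmax i * g i / (N0 * r)) \<ge> real (N i) * real d
               \<and> ?bm i = ereal r)" for i
    have bp: "b i > 0 \<and> ?tm i * b i * log 2 (1 + pmax i * g i / (N0 * b i)) \<ge> real (N i) * real d
               \<and> ?bm i = ereal (b i)" if i: "i \<in> {1..U}" for i
    proof -
      have ex: "\<exists>r. r > 0 \<and> ?tm i * r * log 2 (1 + pmax i * g i / (N0 * r)) \<ge> real (N i) * real d
               \<and> ?bm i = ereal r" using cs[OF i] nf[OF i] by blast
      show ?thesis unfolding b_def by (rule someI_ex[OF ex])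
    qed
    have "ereal (\<Sum>i\<in>{1..U}. b i) = (\<Sum>i\<in>{1..U}. ereal (b i))" by simp
    also have "\<dots> = sum ?bm {1..U}" using bp by (intro sum.cong) auto
    also have "\<dots> \<le> ereal B" using A by blast
    finally have sb: "(\<Sum>i\<in>{1..U}. b i) \<le> B" by simp
    show "\<exists>t b p f :: nat \<Rightarrow> real.
            (\<forall>i\<in>{1..U}.
               (Z i * real d + (real J - 1) * G i * real d) / f i + real J * t i \<le> T
             \<and> t i * b i * log 2 (1 + p i * g i / (N0 * b i)) \<ge> real (N i) * real d
             \<and> 0 \<le> p i \<and> p i \<le> pmax i
             \<and> 0 < f i \<and> f i \<le> fmax i
             \<and> b i > 0 \<and> t i \<ge> 0)
          \<and> (\<Sum>j\<in>{1..U}. b j) \<le> B"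
    proof (intro exI conjI ballI)
      fix i assume i: "i \<in> {1..U}"
      show "?K i / fmax i + real J * ?tm i \<le> T" using tm_eq[of i] by simp
      show "?tm i * b i * log 2 (1 + pmax i * g i / (N0 * b i)) \<ge> real (N i) * real d"
        using bp[OF i] by blast
      show "0 \<le> pmax i" "pmax i \<le> pmax i" using assms(3)[OF i] by auto
      show "0 < fmax i" "fmax i \<le> fmax i" using assms(4)[OF i] by auto
      show "b i > 0" using bp[OF i] by blast
      show "?tm i \<ge> 0" using A i by (auto intro: less_imp_le)
    qed (rule sb)
  }
qed

end
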